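(* Let $X$ be a commutative topological algebra over $\mathbb{K}$, let $M\subset X$, and let $\alpha\ge\aleph_0$ be a cardinal with $\alpha\ge w(X)$. Then $M$ is $\alpha$-infinitely strongly $\alpha$-dense-algebrable if and only if $M$ is strongly $\alpha$-dense-algebrable.
   Context: Algebras are associative linear algebras over $\mathbb{K}$; a topological algebra has continuous sum, product and scalar multiplication. $w(X)$ is the smallest cardinality of a base of the topology. $\langle S\rangle$ is the subalgebra generated by $S$. With $\mathbb{P}_n$ the polynomials in $n$ variables without constant term, $S$ is a set of free generators (SFG) if $P(x_1,\dots,x_n)\neq 0$ for every $n$, every non-zero $P\in\mathbb{P}_n$ and all pairwise distinct $x_1,\dots,x_n\in S$. An $\alpha$-generated free subalgebra is a subalgebra $\langle F\rangle$ with $F$ an SFG of cardinality $\alpha$. $M$ is strongly $\alpha$-dense-algebrable if $M\cup\{0\}$ contains a dense $\alpha$-generated free subalgebra of $X$. For $\alpha\ge\aleph_0$, $M$ is $\alpha$-infinitely strongly $\alpha$-dense-algebrable if there is a family $\{Y_\kappa\}_{\kappa<\alpha}$ of dense $\alpha$-generated free subalgebras of $X$ with $Y_\kappa\subset M\cup\{0\}$ for all $\kappa$ and $Y_{\kappa_1}\cap Y_{\kappa_2}=\{0\}$ for $\kappa_1\ne\kappa_2$. *)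

theory Defs
  imports "HOL-Analysis.Analysis" "HOL-Library.Equipollence"
begin

text \<open>A commutative topological algebra over a scalar field K: the carrier is a type 'a of
class comm_ring (associative, commutative, not necessarily unital) with a topology
(class topological_space); the K-action is the parameter sm.\<close>

definition comm_top_algebra :: "('k::{comm_ring_1,topological_space} \<Rightarrow> 'a::{comm_ring,topological_space} \<Rightarrow> 'a) \<Rightarrow> bool" where
  "comm_top_algebra sm \<longleftrightarrow>
     (\<forall>a x y. sm a (x + y) = sm a x + sm a y) \<and>
     (\<forall>a b x. sm (a + b) x = sm a x + sm b x) \<and>
     (\<forall>a b x. sm a (sm b x) = sm (a * b) x) \<and>
     (\<forall>x. sm 1 x = x) \<and>
     (\<forall>a x y. sm a (x * y) = sm a x * y) \<and>
     continuous_on UNIV (\<lambda>p::'a \<times> 'a. fst p + snd p) \<and>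
     continuous_on UNIV (\<lambda>p::'a \<times> 'a. fst p * snd p) \<and>
     continuous_on UNIV (\<lambda>p::'k \<times> 'a. sm (fst p) (snd p))"

definition is_subalgebra :: "('k::comm_ring_1 \<Rightarrow> 'a::comm_ring \<Rightarrow> 'a) \<Rightarrow> 'a set \<Rightarrow> bool" where
  "is_subalgebra sm T \<longleftrightarrow> 0 \<in> T \<and> (\<forall>x\<in>T. \<forall>y\<in>T. x + y \<in> T \<and> x * y \<in> T) \<and>
     (\<forall>a. \<forall>x\<in>T. sm a x \<in> T)"

definition gen_alg :: "('k::comm_ring_1 \<Rightarrow> 'a::comm_ring \<Rightarrow> 'a) \<Rightarrow> 'a set \<Rightarrow> 'a set" where
  "gen_alg sm S = \<Inter>{T. S \<subseteq> T \<and> is_subalgebra sm T}"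

fun nprod :: "'a::comm_ring list \<Rightarrow> 'a" where
  "nprod [] = 0"
| "nprod [x] = x"
| "nprod (x # y # xs) = x * nprod (y # xs)"

definition monomial_eval :: "nat \<Rightarrow> (nat \<Rightarrow> 'a::comm_ring) \<Rightarrow> (nat \<Rightarrow> nat) \<Rightarrow> 'a" where
  "monomial_eval n x e = nprod (concat (map (\<lambda>i. replicate (e i) (x i)) [0..<n]))"

text \<open>A polynomial in n variables without constant term (element of P_n) is given by its
coefficient function on exponent vectors: finitely many nonzero coefficients, all on
nonzero exponent vectors involving only the variables 0..n-1.\<close>

definition poly_no_const :: "nat \<Rightarrow> ((nat \<Rightarrow> nat) \<Rightarrow> 'k::zero) \<Rightarrow> bool" where
  "poly_no_const n c \<longleftrightarrow> finite {e. c e \<noteq> 0} \<and>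
     (\<forall>e. c e \<noteq> 0 \<longrightarrow> e \<noteq> (\<lambda>_. 0) \<and> (\<forall>i\<ge>n. e i = 0))"

definition poly_eval :: "('k::comm_ring_1 \<Rightarrow> 'a::comm_ring \<Rightarrow> 'a) \<Rightarrow> nat \<Rightarrow> ((nat \<Rightarrow> nat) \<Rightarrow> 'k)
    \<Rightarrow> (nat \<Rightarrow> 'a) \<Rightarrow> 'a" where
  "poly_eval sm n c x = (\<Sum>e\<in>{e. c e \<noteq> 0}. sm (c e) (monomial_eval n x e))"

definition SFG :: "('k::comm_ring_1 \<Rightarrow> 'a::comm_ring \<Rightarrow> 'a) \<Rightarrow> 'a set \<Rightarrow> bool" where
  "SFG sm S \<longleftrightarrow> (\<forall>n c x. poly_no_const n c \<and> c \<noteq> (\<lambda>_. 0) \<and>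
      inj_on x {..<n} \<and> x ` {..<n} \<subseteq> S \<longrightarrow> poly_eval sm n c x \<noteq> 0)"

text \<open>Cardinals alpha are represented by sets A (alpha = |A|).\<close>

definition free_subalgebra_card :: "('k::comm_ring_1 \<Rightarrow> 'a::comm_ring \<Rightarrow> 'a) \<Rightarrow> 'c set \<Rightarrow> 'a set \<Rightarrow> bool" where
  "free_subalgebra_card sm A Y \<longleftrightarrow> (\<exists>F. SFG sm F \<and> F \<approx> A \<and> Y = gen_alg sm F)"

definition strongly_dense_algebrable ::
    "('k::comm_ring_1 \<Rightarrow> 'a::{comm_ring,topological_space} \<Rightarrow> 'a) \<Rightarrow> 'c set \<Rightarrow> 'a set \<Rightarrow> bool" where
  "strongly_dense_algebrable sm A M \<longleftrightarrow>
     (\<exists>Y. free_subalgebra_card sm A Y \<and> closure Y = UNIV \<and> Y \<subseteq> M \<union> {0})"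

definition inf_strongly_dense_algebrable ::
    "('k::comm_ring_1 \<Rightarrow> 'a::{comm_ring,topological_space} \<Rightarrow> 'a) \<Rightarrow> 'c set \<Rightarrow> 'a set \<Rightarrow> bool" where
  "inf_strongly_dense_algebrable sm A M \<longleftrightarrow>
     (\<exists>Y :: 'c \<Rightarrow> 'a set.
        (\<forall>\<kappa>\<in>A. free_subalgebra_card sm A (Y \<kappa>) \<and> closure (Y \<kappa>) = UNIV \<and> Y \<kappa> \<subseteq> M \<union> {0}) \<and>
        (\<forall>\<kappa>1\<in>A. \<forall>\<kappa>2\<in>A. \<kappa>1 \<noteq> \<kappa>2 \<longrightarrow> Y \<kappa>1 \<inter> Y \<kappa>2 = {0}))"

definition weight_le :: "'a::topological_space itself \<Rightarrow> 'c set \<Rightarrow> bool" where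
  "weight_le _ A \<longleftrightarrow> (\<exists>B::'a set set. topological_basis B \<and> B \<lesssim> A)"

end

theory Submission
  imports Defs "HOL-Library.Poly_Mapping"
begin


definition alg_ax :: "('k::comm_ring_1 \<Rightarrow> 'a::comm_ring \<Rightarrow> 'a) \<Rightarrow> bool" where
  "alg_ax sm \<longleftrightarrow>
     (\<forall>a x y. sm a (x + y) = sm a x + sm a y) \<and>
     (\<forall>a b x. sm (a + b) x = sm a x + sm b x) \<and>
     (\<forall>a b x. sm a (sm b x) = sm (a * b) x) \<and>
     (\<forall>x. sm 1 x = x) \<and>
     (\<forall>a x y. sm a (x * y) = sm a x * y)"

lemma cta_alg_ax: "comm_top_algebra sm \<Longrightarrow> alg_ax sm"
  unfolding comm_top_algebra_def alg_ax_def by blast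

context
  fixes sm :: "'k::comm_ring_1 \<Rightarrow> 'a::comm_ring \<Rightarrow> 'a"
  assumes ax: "alg_ax sm"
begin

lemma sm_add: "sm a (x + y) = sm a x + sm a y" using ax unfolding alg_ax_def by blast
lemma sm_add_left: "sm (a + b) x = sm a x + sm b x" using ax unfolding alg_ax_def by blast
lemma sm_sm: "sm a (sm b x) = sm (a * b) x" using ax unfolding alg_ax_def by blast
lemma sm_one: "sm 1 x = x" using ax unfolding alg_ax_def by blast
lemma sm_mult: "sm a (x * y) = sm a x * y" using ax unfolding alg_ax_def by blast

lemma sm_zero: "sm a 0 = 0"
  using sm_add[of a 0 0] by simp
lemma sm_zero_left: "sm 0 x = 0"
  using sm_add_left[of 0 0 x] by simp
lemma sm_minus: "sm a (- x) = - sm a x"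
  using sm_add[of a x "-x"] sm_zero by (metis add.commute neg_eq_iff_add_eq_0 add.right_inverse)
lemma sm_diff: "sm a (x - y) = sm a x - sm a y"
  using sm_add[of a x "-y"] sm_minus by simp
lemma sm_mult_right: "sm a (x * y) = x * sm a y"
  using sm_mult[of a y x] by (simp add: mult.commute)
lemma sm_mult_both: "sm a x * sm b y = sm (a * b) (x * y)"
  by (metis sm_mult sm_mult_right sm_sm mult.commute)
lemma sm_sum: "sm a (sum f S) = (\<Sum>i\<in>S. sm a (f i))"
  by (induction S rule: infinite_finite_induct) (auto simp: sm_zero sm_add)
lemma sm_sum_left: "sm (sum f S) x = (\<Sum>i\<in>S. sm (f i) x)"
  by (induction S rule: infinite_finite_induct) (auto simp: sm_zero_left sm_add_left)

end


interpretation mcfc: comp_fun_commute "(*) :: 'a::ab_semigroup_mult \<Rightarrow> 'a \<Rightarrow> 'a"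
  by unfold_locales (auto simp: fun_eq_iff ac_simps)

lemma fold_mult_assoc: "fold_mset (*) (a * b) N = a * fold_mset (*) (b::'a::ab_semigroup_mult) N"
  by (induction N) (auto simp: ac_simps)

definition mprod :: "'a::{ab_semigroup_mult,zero} multiset \<Rightarrow> 'a" where
  "mprod M = (if M = {#} then 0 else fold_mset (*) (SOME x. x \<in># M) (M - {#SOME x. x \<in># M#}))"

lemma fold_swap: "fold_mset (*) x (add_mset y N) = fold_mset (*) y (add_mset (x::'a::ab_semigroup_mult) N)"
proof -
  have "fold_mset (*) x (add_mset y N) = y * fold_mset (*) x N" by simp
  also have "\<dots> = fold_mset (*) (y * x) N" by (simp add: fold_mult_assoc)
  also have "\<dots> = fold_mset (*) (x * y) N" by (simp add: ac_simps)
  also have "\<dots> = x * fold_mset (*) y N" by (simp add: fold_mult_assoc)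
  finally show ?thesis by simp
qed

lemma fold_choice: "x \<in># M \<Longrightarrow> y \<in># M \<Longrightarrow>
   fold_mset (*) x (M - {#x#}) = fold_mset (*) (y::'a::ab_semigroup_mult) (M - {#y#})"
proof (cases "x = y")
  case False
  assume x: "x \<in># M" and y: "y \<in># M"
  obtain N where N: "M = add_mset x (add_mset y N)"
    using x y False by (metis insert_DiffM multi_member_split diff_single_trivial
        in_diffD insert_noteq_member)
  show ?thesis using fold_swap[of y x N] N by (simp add: add_mset_commute)
qed simp

lemma mprod_add_mset: "mprod (add_mset x N) = fold_mset (*) x N"
proof -
  let ?M = "add_mset x N"
  have s: "(SOME x. x \<in># ?M) \<in># ?M" by (rule someI[of _ x]) simp
  show ?thesis unfolding mprod_def
    using fold_choice[OF s, of x] by simp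
qed

lemma mprod_empty [simp]: "mprod {#} = 0" by (simp add: mprod_def)
lemma mprod_single [simp]: "mprod {#x#} = x" by (simp add: mprod_add_mset)

lemma mprod_union: "M \<noteq> {#} \<Longrightarrow> N \<noteq> {#} \<Longrightarrow> mprod (M + N) = mprod M * mprod N"
proof -
  assume "M \<noteq> {#}" "N \<noteq> {#}"
  then obtain x M' y N' where M: "M = add_mset x M'" and N: "N = add_mset y N'"
    by (metis multiset_cases)
  have e: "M + N = add_mset x (M' + add_mset y N')" by (simp add: M N)
  have "mprod (M + N) = fold_mset (*) x (M' + add_mset y N')"
    unfolding e by (rule mprod_add_mset)
  also have "\<dots> = fold_mset (*) (fold_mset (*) x M') (add_mset y N')"
    by (rule mcfc.fold_mset_union)
  also have "\<dots> = y * fold_mset (*) (fold_mset (*) x M') N'" by (rule mcfc.fold_mset_add_mset)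
  also have "\<dots> = fold_mset (*) (y * fold_mset (*) x M') N'" by (simp add: fold_mult_assoc)
  also have "\<dots> = fold_mset (*) (fold_mset (*) x M' * y) N'" by (simp add: ac_simps)
  also have "\<dots> = fold_mset (*) x M' * fold_mset (*) y N'" by (simp add: fold_mult_assoc)
  finally show ?thesis by (simp add: M N mprod_add_mset)
qed

lemma mprod_add_mset2: "N \<noteq> {#} \<Longrightarrow> mprod (add_mset x N) = x * mprod N"
  using mprod_union[of "{#x#}" N] by simp

lemma mprod_hom:
  assumes "\<And>x y. x \<in> D \<Longrightarrow> y \<in> D \<Longrightarrow> T (x * y) = T x * T y"
    and "\<And>x y. x \<in> D \<Longrightarrow> y \<in> D \<Longrightarrow> x * y \<in> D"
    and "set_mset M \<subseteq> D" and "M \<noteq> {#}"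
  shows "T (mprod M) = mprod (image_mset T M) \<and> mprod M \<in> D"
  using assms(3,4)
proof (induction M)
  case empty then show ?case by simp
next
  case (add x M)
  show ?case
  proof (cases "M = {#}")
    case True then show ?thesis using add by simp
  next
    case False
    then have ih: "T (mprod M) = mprod (image_mset T M)" "mprod M \<in> D" using add by auto
    have xD: "x \<in> D" using add by auto
    show ?thesis using False ih xD assms(1,2) by (simp add: mprod_add_mset2)
  qed
qed

lemma nprod_mprod: "nprod xs = mprod (mset xs)"
proof (induction xs rule: nprod.induct)
  case (3 x y xs)
  then show ?case using mprod_add_mset2[of "add_mset y (mset xs)" x] by simp
qed simp_all


definition evv :: "('k::comm_ring_1 \<Rightarrow> 'a::comm_ring \<Rightarrow> 'a) \<Rightarrow> ('v \<Rightarrow> 'a) \<Rightarrow> ('v multiset \<Rightarrow>\<^sub>0 'k) \<Rightarrow> 'a" where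
  "evv sm \<phi> p = (\<Sum>m\<in>Poly_Mapping.keys p. sm (Poly_Mapping.lookup p m) (mprod (image_mset \<phi> m)))"

definition Var :: "'v \<Rightarrow> ('v multiset \<Rightarrow>\<^sub>0 'k::comm_ring_1)" where
  "Var x = Poly_Mapping.single {#x#} 1"

definition smP :: "'k::comm_ring_1 \<Rightarrow> ('v multiset \<Rightarrow>\<^sub>0 'k) \<Rightarrow> ('v multiset \<Rightarrow>\<^sub>0 'k)" where
  "smP a p = Poly_Mapping.single 0 a * p"

definition Pol :: "'v set \<Rightarrow> ('v multiset \<Rightarrow>\<^sub>0 'k::comm_ring_1) set" where
  "Pol S = {p. 0 \<notin> Poly_Mapping.keys p \<and> (\<forall>m\<in>Poly_Mapping.keys p. set_mset m \<subseteq> S)}"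

lemma pm_decomp: "p = (\<Sum>m\<in>Poly_Mapping.keys p. Poly_Mapping.single m (Poly_Mapping.lookup p m))"
proof (rule poly_mapping_eqI)
  fix k
  show "Poly_Mapping.lookup p k = Poly_Mapping.lookup (\<Sum>m\<in>Poly_Mapping.keys p. Poly_Mapping.single m (Poly_Mapping.lookup p m)) k"
    by (simp add: lookup_sum lookup_single when_def in_keys_iff)
qed

lemma alg_ax_smP: "alg_ax (smP :: 'k::comm_ring_1 \<Rightarrow> ('v multiset \<Rightarrow>\<^sub>0 'k) \<Rightarrow> _)"
  unfolding alg_ax_def smP_def
  by (auto simp: algebra_simps single_add mult_single simp flip: mult.assoc)

lemma smP_decomp: "smP a p = (\<Sum>m\<in>Poly_Mapping.keys p. Poly_Mapping.single m (a * Poly_Mapping.lookup p m))"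
proof -
  have "smP a p = Poly_Mapping.single 0 a * (\<Sum>m\<in>Poly_Mapping.keys p. Poly_Mapping.single m (Poly_Mapping.lookup p m))"
    unfolding smP_def by (subst pm_decomp) simp
  also have "\<dots> = (\<Sum>m\<in>Poly_Mapping.keys p. Poly_Mapping.single m (a * Poly_Mapping.lookup p m))"
    by (simp add: sum_distrib_left mult_single)
  finally show ?thesis .
qed

lemma keys_sum_single: "Poly_Mapping.keys (\<Sum>m\<in>K. Poly_Mapping.single (f m) (g m)) \<subseteq> f ` K"
  using keys_sum[of "\<lambda>m. Poly_Mapping.single (f m) (g m)" K] by (auto split: if_splits)

lemma mult_decomp: "p * q = (\<Sum>m\<in>Poly_Mapping.keys p. \<Sum>n\<in>Poly_Mapping.keys q. Poly_Mapping.single (m + n) (Poly_Mapping.lookup p m * Poly_Mapping.lookup q n))"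
proof -
  have "p * q = (\<Sum>m\<in>Poly_Mapping.keys p. Poly_Mapping.single m (Poly_Mapping.lookup p m)) * (\<Sum>n\<in>Poly_Mapping.keys q. Poly_Mapping.single n (Poly_Mapping.lookup q n))"
    by (subst pm_decomp[of p], subst pm_decomp[of q]) (rule refl)
  also have "\<dots> = (\<Sum>m\<in>Poly_Mapping.keys p. \<Sum>n\<in>Poly_Mapping.keys q. Poly_Mapping.single (m + n) (Poly_Mapping.lookup p m * Poly_Mapping.lookup q n))"
    by (simp add: sum_product mult_single)
  finally show ?thesis .
qed

lemma keys_mult_sub: "Poly_Mapping.keys (p * q) \<subseteq> {m + n |m n. m \<in> Poly_Mapping.keys p \<and> n \<in> Poly_Mapping.keys q}"
proof -
  have "Poly_Mapping.keys (p * q) \<subseteq> (\<Union>m\<in>Poly_Mapping.keys p. Poly_Mapping.keys (\<Sum>n\<in>Poly_Mapping.keys q. Poly_Mapping.single (m + n) (Poly_Mapping.lookup p m * Poly_Mapping.lookup q n)))"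
    by (subst mult_decomp) (rule keys_sum)
  also have "\<dots> \<subseteq> {m + n |m n. m \<in> Poly_Mapping.keys p \<and> n \<in> Poly_Mapping.keys q}"
  proof -
    have "\<And>m. Poly_Mapping.keys (\<Sum>n\<in>Poly_Mapping.keys q. Poly_Mapping.single (m + n) (Poly_Mapping.lookup p m * Poly_Mapping.lookup q n)) \<subseteq> (+) m ` Poly_Mapping.keys q"
      by (rule keys_sum_single)
    then show ?thesis by blast
  qed
  finally show ?thesis .
qed

lemma keys_smP: "Poly_Mapping.keys (smP a p) \<subseteq> Poly_Mapping.keys p"
  unfolding smP_decomp using keys_sum_single[of id] by simp

lemma Pol_zero [simp]: "0 \<in> Pol S" by (simp add: Pol_def)
lemma Pol_add: "p \<in> Pol S \<Longrightarrow> q \<in> Pol S \<Longrightarrow> p + q \<in> Pol S"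
  unfolding Pol_def using keys_add[of p q] by blast
lemma Pol_uminus: "p \<in> Pol S \<Longrightarrow> - p \<in> Pol S"
  unfolding Pol_def by simp
lemma Pol_diff: "p \<in> Pol S \<Longrightarrow> q \<in> Pol S \<Longrightarrow> p - q \<in> Pol S"
  by (metis Pol_add Pol_uminus diff_conv_add_uminus)
lemma Pol_smP: "p \<in> Pol S \<Longrightarrow> smP a p \<in> Pol S"
  unfolding Pol_def using keys_smP by blast
lemma Pol_mult: "p \<in> Pol S \<Longrightarrow> q \<in> Pol S \<Longrightarrow> p * q \<in> Pol S"
  unfolding Pol_def using keys_mult_sub[of p q] by fastforce
lemma Pol_Var: "x \<in> S \<Longrightarrow> Var x \<in> Pol S"
  unfolding Pol_def Var_def by simp
lemma Pol_mono: "S \<subseteq> T \<Longrightarrow> Pol S \<subseteq> Pol T"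
  unfolding Pol_def by blast

lemma evv_cong: "(\<And>m x. m \<in> Poly_Mapping.keys p \<Longrightarrow> x \<in># m \<Longrightarrow> \<phi> x = \<psi> x) \<Longrightarrow> evv sm \<phi> p = evv sm \<psi> p"
  unfolding evv_def by (intro sum.cong refl arg_cong[where f="sm _"] arg_cong[where f=mprod] image_mset_cong) auto

lemma sum_hom:
  fixes T :: "'a::ab_group_add \<Rightarrow> 'b::ab_group_add"
  assumes "\<And>x y. T (x + y) = T x + T y"
  shows "T (sum f K) = (\<Sum>i\<in>K. T (f i))"
proof -
  have T0: "T 0 = 0" using assms[of 0 0] by simp
  show ?thesis by (induction K rule: infinite_finite_induct) (auto simp: T0 assms)
qed

lemma evv_hom:
  fixes T :: "'a::comm_ring \<Rightarrow> 'b::comm_ring"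
    and sm1 :: "'k::comm_ring_1 \<Rightarrow> 'a \<Rightarrow> 'a" and sm2 :: "'k \<Rightarrow> 'b \<Rightarrow> 'b"
  assumes add: "\<And>x y. T (x + y) = T x + T y"
    and smc: "\<And>a x. x \<in> D \<Longrightarrow> T (sm1 a x) = sm2 a (T x)"
    and mul: "\<And>x y. x \<in> D \<Longrightarrow> y \<in> D \<Longrightarrow> T (x * y) = T x * T y"
    and cl: "\<And>x y. x \<in> D \<Longrightarrow> y \<in> D \<Longrightarrow> x * y \<in> D"
    and vars: "\<And>m x. m \<in> Poly_Mapping.keys p \<Longrightarrow> x \<in># m \<Longrightarrow> \<phi> x \<in> D"
    and nc: "0 \<notin> Poly_Mapping.keys p"
  shows "T (evv sm1 \<phi> p) = evv sm2 (T \<circ> \<phi>) p"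
  unfolding evv_def
proof (subst sum_hom[OF add], intro sum.cong refl)
  fix m assume m: "m \<in> Poly_Mapping.keys p"
  have ne: "image_mset \<phi> m \<noteq> {#}" using m nc by auto
  have sub: "set_mset (image_mset \<phi> m) \<subseteq> D" using vars[OF m] by auto
  from mprod_hom[of D T, OF mul cl sub ne]
  show "T (sm1 (Poly_Mapping.lookup p m) (mprod (image_mset \<phi> m))) = sm2 (Poly_Mapping.lookup p m) (mprod (image_mset (T \<circ> \<phi>) m))"
    by (simp add: smc multiset.map_comp)
qed

context
  fixes sm :: "'k::comm_ring_1 \<Rightarrow> 'a::comm_ring \<Rightarrow> 'a"
  assumes ax: "alg_ax sm"
begin

lemma evv_superset:
  assumes "finite K" "Poly_Mapping.keys p \<subseteq> K"
  shows "evv sm \<phi> p = (\<Sum>m\<in>K. sm (Poly_Mapping.lookup p m) (mprod (image_mset \<phi> m)))"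
  unfolding evv_def
  by (rule sum.mono_neutral_left) (use assms in \<open>auto simp: sm_zero_left[OF ax] in_keys_iff\<close>)

lemma evv_add: "evv sm \<phi> (p + q) = evv sm \<phi> p + evv sm \<phi> q"
proof -
  let ?K = "Poly_Mapping.keys p \<union> Poly_Mapping.keys q"
  have f: "finite ?K" by simp
  show ?thesis
    using evv_superset[OF f, of "p+q"] evv_superset[OF f, of p] evv_superset[OF f, of q] keys_add[of p q]
    by (simp add: lookup_add sm_add_left[OF ax] sum.distrib)
qed

lemma evv_zero [simp]: "evv sm \<phi> 0 = 0" by (simp add: evv_def)

lemma evv_uminus: "evv sm \<phi> (- p) = - evv sm \<phi> p"
  using evv_add[of \<phi> p "-p"] by (metis add.commute add.right_inverse evv_zero neg_eq_iff_add_eq_0)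

lemma evv_diff: "evv sm \<phi> (p - q) = evv sm \<phi> p - evv sm \<phi> q"
  using evv_add[of \<phi> p "-q"] evv_uminus[of \<phi> q] by simp

lemma evv_sum: "evv sm \<phi> (sum f K) = (\<Sum>i\<in>K. evv sm \<phi> (f i))"
  by (rule sum_hom) (rule evv_add)

lemma evv_single: "evv sm \<phi> (Poly_Mapping.single m a) = sm a (mprod (image_mset \<phi> m))"
  by (cases "a = 0") (simp_all add: evv_def sm_zero_left[OF ax])

lemma evv_Var: "evv sm \<phi> (Var x) = \<phi> x"
  by (simp add: Var_def evv_single sm_one[OF ax])

lemma evv_smP: "evv sm \<phi> (smP a p) = sm a (evv sm \<phi> p)"
proof -
  have "evv sm \<phi> (smP a p) = (\<Sum>m\<in>Poly_Mapping.keys p. sm (a * Poly_Mapping.lookup p m) (mprod (image_mset \<phi> m)))"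
    by (simp add: smP_decomp evv_sum evv_single)
  also have "\<dots> = sm a (evv sm \<phi> p)"
    by (simp add: evv_def sm_sum[OF ax] sm_sm[OF ax])
  finally show ?thesis .
qed

lemma evv_mult:
  assumes "0 \<notin> Poly_Mapping.keys p" "0 \<notin> Poly_Mapping.keys q"
  shows "evv sm \<phi> (p * q) = evv sm \<phi> p * evv sm \<phi> q"
proof -
  have "evv sm \<phi> (p * q) = (\<Sum>m\<in>Poly_Mapping.keys p. \<Sum>n\<in>Poly_Mapping.keys q. sm (Poly_Mapping.lookup p m * Poly_Mapping.lookup q n) (mprod (image_mset \<phi> (m + n))))"
    by (simp add: mult_decomp evv_sum evv_single)
  also have "\<dots> = (\<Sum>m\<in>Poly_Mapping.keys p. \<Sum>n\<in>Poly_Mapping.keys q. sm (Poly_Mapping.lookup p m) (mprod (image_mset \<phi> m)) * sm (Poly_Mapping.lookup q n) (mprod (image_mset \<phi> n)))"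
  proof (intro sum.cong refl)
    fix m n assume "m \<in> Poly_Mapping.keys p" "n \<in> Poly_Mapping.keys q"
    then have "m \<noteq> 0" "n \<noteq> 0" using assms by auto
    then show "sm (Poly_Mapping.lookup p m * Poly_Mapping.lookup q n) (mprod (image_mset \<phi> (m + n))) =
        sm (Poly_Mapping.lookup p m) (mprod (image_mset \<phi> m)) * sm (Poly_Mapping.lookup q n) (mprod (image_mset \<phi> n))"
      by (simp add: mprod_union sm_mult_both[OF ax])
  qed
  also have "\<dots> = evv sm \<phi> p * evv sm \<phi> q"
    by (simp add: evv_def sum_product)
  finally show ?thesis .
qed

lemma is_subalgebra_sum: "is_subalgebra sm Z \<Longrightarrow> (\<And>i. i \<in> K \<Longrightarrow> f i \<in> Z) \<Longrightarrow> sum f K \<in> Z"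
  unfolding is_subalgebra_def
  by (induction K rule: infinite_finite_induct) auto

lemma evv_in_subalg:
  assumes Z: "is_subalgebra sm Z" and p: "p \<in> Pol S" and phi: "\<phi> ` S \<subseteq> Z"
  shows "evv sm \<phi> p \<in> Z"
  unfolding evv_def
proof (rule is_subalgebra_sum[OF Z])
  fix m assume m: "m \<in> Poly_Mapping.keys p"
  have ne: "image_mset \<phi> m \<noteq> {#}" using m p by (auto simp: Pol_def)
  have sub: "set_mset (image_mset \<phi> m) \<subseteq> Z" using m p phi by (auto simp: Pol_def)
  have "mprod (image_mset \<phi> m) \<in> Z"
    using mprod_hom[of Z id, OF _ _ sub ne] Z by (auto simp: is_subalgebra_def)
  then show "sm (Poly_Mapping.lookup p m) (mprod (image_mset \<phi> m)) \<in> Z"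
    using Z by (auto simp: is_subalgebra_def)
qed

end


definition free :: "('k::comm_ring_1 \<Rightarrow> 'a::comm_ring \<Rightarrow> 'a) \<Rightarrow> 'a set \<Rightarrow> bool" where
  "free sm S \<longleftrightarrow> (\<forall>p \<in> Pol S. evv sm id p = 0 \<longrightarrow> p = 0)"

lemma is_subalgebra_UNIV: "is_subalgebra sm UNIV" by (simp add: is_subalgebra_def)

lemma gen_alg_sub: "S \<subseteq> gen_alg sm S" unfolding gen_alg_def by blast

lemma gen_alg_subalg: "is_subalgebra sm (gen_alg sm S)"
  unfolding gen_alg_def is_subalgebra_def by blast

lemma gen_alg_least: "is_subalgebra sm T \<Longrightarrow> S \<subseteq> T \<Longrightarrow> gen_alg sm S \<subseteq> T"
  unfolding gen_alg_def by blast

lemma gen_alg_mono: "S \<subseteq> T \<Longrightarrow> gen_alg sm S \<subseteq> gen_alg sm T"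
  by (meson gen_alg_least gen_alg_sub gen_alg_subalg order_trans)

lemma zero_gen_alg: "0 \<in> gen_alg sm S"
  using gen_alg_subalg unfolding is_subalgebra_def by blast

lemma Pol_subalg: "is_subalgebra smP (Pol S)"
  unfolding is_subalgebra_def by (auto intro: Pol_add Pol_mult Pol_smP)

lemma free_mono: "free sm S \<Longrightarrow> T \<subseteq> S \<Longrightarrow> free sm T"
  unfolding free_def using Pol_mono by blast

lemma Var_inj: "(Var x :: 'v multiset \<Rightarrow>\<^sub>0 'k::comm_ring_1) = Var y \<Longrightarrow> x = y"
  apply (drule arg_cong[where f = "\<lambda>p. Poly_Mapping.lookup p {#x#}"])
  by (simp add: Var_def lookup_single when_def split: if_splits)

lemma mprod_Var: "m \<noteq> {#} \<Longrightarrow> mprod (image_mset Var m) = (Poly_Mapping.single m 1 :: 'v multiset \<Rightarrow>\<^sub>0 'k::comm_ring_1)"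
proof (induction m)
  case (add x m)
  show ?case
  proof (cases "m = {#}")
    case True then show ?thesis by (simp add: Var_def)
  next
    case False
    then show ?thesis using add by (simp add: mprod_add_mset2 Var_def mult_single)
  qed
qed simp

lemma subst_Var_id:
  assumes "0 \<notin> Poly_Mapping.keys q"
  shows "evv smP Var q = q"
proof -
  have "evv smP Var q = (\<Sum>m\<in>Poly_Mapping.keys q. Poly_Mapping.single m (Poly_Mapping.lookup q m))"
    unfolding evv_def
  proof (intro sum.cong refl)
    fix m assume "m \<in> Poly_Mapping.keys q"
    then have "m \<noteq> {#}" using assms by auto
    then show "smP (Poly_Mapping.lookup q m) (mprod (image_mset Var m)) = Poly_Mapping.single m (Poly_Mapping.lookup q m)"
      by (simp add: mprod_Var smP_def mult_single)
  qed
  then show ?thesis using pm_decomp[of q] by simp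
qed

context
  fixes sm :: "'k::comm_ring_1 \<Rightarrow> 'a::comm_ring \<Rightarrow> 'a"
  assumes ax: "alg_ax sm"
begin

lemma gen_alg_Pol: "gen_alg sm S \<subseteq> evv sm id ` Pol S"
proof (rule gen_alg_least)
  show "S \<subseteq> evv sm id ` Pol S"
  proof
    fix x assume "x \<in> S"
    then show "x \<in> evv sm id ` Pol S"
      using evv_Var[OF ax, of id x] Pol_Var[of x S] by (metis id_apply image_eqI)
  qed
  show "is_subalgebra sm (evv sm id ` Pol S)"
    unfolding is_subalgebra_def
  proof (intro conjI ballI allI)
    show "0 \<in> evv sm id ` Pol S" using evv_zero[OF ax] Pol_zero by (metis image_eqI)
  next
    fix x y assume "x \<in> evv sm id ` Pol S" "y \<in> evv sm id ` Pol S"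
    then obtain p q where p: "p \<in> Pol S" "x = evv sm id p" and q: "q \<in> Pol S" "y = evv sm id q" by blast
    show "x + y \<in> evv sm id ` Pol S"
      using p q evv_add[OF ax, of id p q] Pol_add[OF p(1) q(1)] by (metis image_eqI)
    have "x * y = evv sm id (p * q)" using p q evv_mult[OF ax, of p q id] by (simp add: Pol_def)
    then show "x * y \<in> evv sm id ` Pol S" using Pol_mult[OF p(1) q(1)] by blast
  next
    fix a x assume "x \<in> evv sm id ` Pol S"
    then obtain p where p: "p \<in> Pol S" "x = evv sm id p" by blast
    show "sm a x \<in> evv sm id ` Pol S"
      using p evv_smP[OF ax, of id a p] Pol_smP[OF p(1), of a] by (metis image_eqI)
  qed
qed

lemma Pol_gen_alg: "p \<in> Pol S \<Longrightarrow> evv sm id p \<in> gen_alg sm S"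
  by (rule evv_in_subalg[OF ax gen_alg_subalg]) (auto intro: gen_alg_sub[THEN subsetD])

lemma free_eq: "free sm F \<Longrightarrow> p \<in> Pol F \<Longrightarrow> q \<in> Pol F \<Longrightarrow> evv sm id p = evv sm id q \<Longrightarrow> p = q"
  unfolding free_def using Pol_diff[of p F q] evv_diff[OF ax, of id p q] by auto

lemma free_disjoint:
  assumes fr: "free sm S" and "S1 \<subseteq> S" "S2 \<subseteq> S" "S1 \<inter> S2 = {}"
  shows "gen_alg sm S1 \<inter> gen_alg sm S2 = {0}"
proof
  show "{0} \<subseteq> gen_alg sm S1 \<inter> gen_alg sm S2" using zero_gen_alg by blast
  show "gen_alg sm S1 \<inter> gen_alg sm S2 \<subseteq> {0}"
  proof
    fix y assume "y \<in> gen_alg sm S1 \<inter> gen_alg sm S2"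
    then obtain p1 p2 where p1: "p1 \<in> Pol S1" "y = evv sm id p1" and p2: "p2 \<in> Pol S2" "y = evv sm id p2"
      using gen_alg_Pol by blast
    have "p1 \<in> Pol S" "p2 \<in> Pol S" using p1 p2 Pol_mono assms by blast+
    then have "p1 = p2" using free_eq[OF fr] p1 p2 by simp
    have "Poly_Mapping.keys p1 = {}"
    proof (rule ccontr)
      assume "Poly_Mapping.keys p1 \<noteq> {}"
      then obtain m where m: "m \<in> Poly_Mapping.keys p1" by blast
      have "set_mset m \<subseteq> S1" "set_mset m \<subseteq> S2" "m \<noteq> {#}"
        using m p1(1) p2(1) \<open>p1 = p2\<close> unfolding Pol_def by auto
      then show False using assms(4) by (metis disjoint_iff multiset_nonemptyE subsetD)
    qed
    then have "p1 = 0" by simp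
    then show "y \<in> {0}" using p1 evv_zero[OF ax] by simp
  qed
qed

lemma subst_hom:
  assumes nc: "0 \<notin> Poly_Mapping.keys q"
    and vars: "\<And>m x. m \<in> Poly_Mapping.keys q \<Longrightarrow> x \<in># m \<Longrightarrow> r x \<in> Pol UNIV"
  shows "evv sm \<psi> (evv smP r q) = evv sm (evv sm \<psi> \<circ> r) q"
proof (rule evv_hom[where D="Pol UNIV"])
  show "\<And>x y. evv sm \<psi> (x + y) = evv sm \<psi> x + evv sm \<psi> y" by (rule evv_add[OF ax])
  show "\<And>a x. evv sm \<psi> (smP a x) = sm a (evv sm \<psi> x)" by (rule evv_smP[OF ax])
  show "\<And>x y. x \<in> Pol UNIV \<Longrightarrow> y \<in> Pol UNIV \<Longrightarrow> evv sm \<psi> (x * y) = evv sm \<psi> x * evv sm \<psi> y"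
    by (rule evv_mult[OF ax]) (auto simp: Pol_def)
  show "\<And>x y. x \<in> Pol UNIV \<Longrightarrow> y \<in> Pol UNIV \<Longrightarrow> x * y \<in> Pol UNIV" by (rule Pol_mult)
qed (use nc vars in auto)

end


lemma free_transfer:
  fixes sm :: "'k::comm_ring_1 \<Rightarrow> 'a::comm_ring \<Rightarrow> 'a"
  assumes ax: "alg_ax sm" and fr: "free sm F"
    and r: "\<And>y. y \<in> H \<Longrightarrow> r y \<in> Pol F \<and> evv sm id (r y) = y"
    and inj: "inj_on \<rho> H"
    and s: "\<And>y. y \<in> H \<Longrightarrow> evv smP s (r y) = (Var (\<rho> y) :: 'v multiset \<Rightarrow>\<^sub>0 'k)"
  shows "free sm H"
  unfolding free_def
proof (intro ballI impI)
  fix q assume q: "q \<in> Pol H" and ev0: "evv sm id q = 0"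
  have nc: "0 \<notin> Poly_Mapping.keys q" and vq: "\<And>m x. m \<in> Poly_Mapping.keys q \<Longrightarrow> x \<in># m \<Longrightarrow> x \<in> H"
    using q by (auto simp: Pol_def)
  have rU: "\<And>m x. m \<in> Poly_Mapping.keys q \<Longrightarrow> x \<in># m \<Longrightarrow> r x \<in> Pol UNIV"
    using vq r Pol_mono[of F UNIV] by blast
  define q' where "q' = evv smP r q"
  have q'F: "q' \<in> Pol F"
    unfolding q'_def by (rule evv_in_subalg[OF alg_ax_smP Pol_subalg q]) (use r in blast)
  have "evv sm id q' = evv sm (evv sm id \<circ> r) q"
    unfolding q'_def by (rule subst_hom[OF ax nc rU])
  also have "\<dots> = evv sm id q"
    by (rule evv_cong) (use vq r in auto)
  finally have "q' = 0" using fr q'F ev0 unfolding free_def by auto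
  have "evv smP s q' = evv smP (evv smP s \<circ> r) q"
    unfolding q'_def by (rule subst_hom[OF alg_ax_smP nc rU])
  also have "\<dots> = evv smP (Var \<circ> \<rho>) q"
    by (rule evv_cong) (use vq s in auto)
  finally have z: "evv smP (Var \<circ> \<rho>) q = 0" using \<open>q' = 0\<close> by (simp add: evv_zero[OF alg_ax_smP])
  let ?\<rho>' = "inv_into H \<rho>"
  have VU: "\<And>m x. m \<in> Poly_Mapping.keys q \<Longrightarrow> x \<in># m \<Longrightarrow> (Var \<circ> \<rho>) x \<in> (Pol UNIV :: ('v multiset \<Rightarrow>\<^sub>0 'k) set)"
    by (simp add: Pol_Var)
  have "evv smP (Var \<circ> ?\<rho>') (evv smP (Var \<circ> \<rho>) q) = evv smP (evv smP (Var \<circ> ?\<rho>') \<circ> (Var \<circ> \<rho>)) q"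
    by (rule subst_hom[OF alg_ax_smP nc VU])
  also have "\<dots> = evv smP Var q"
    by (rule evv_cong) (use vq inj in \<open>auto simp: evv_Var[OF alg_ax_smP]\<close>)
  also have "\<dots> = q" by (rule subst_Var_id[OF nc])
  finally show "q = 0" using z by (simp add: evv_zero[OF alg_ax_smP])
qed


definition msetof :: "nat \<Rightarrow> (nat \<Rightarrow> 'a) \<Rightarrow> (nat \<Rightarrow> nat) \<Rightarrow> 'a multiset" where
  "msetof n x e = (\<Sum>i<n. replicate_mset (e i) (x i))"

lemma mset_concat_upt: "mset (concat (map (\<lambda>i. replicate (e i) (x i)) [0..<n])) = msetof n x e"
  unfolding msetof_def by (induction n) auto

lemma monomial_eval_mset: "monomial_eval n x e = mprod (msetof n x e)"
  unfolding monomial_eval_def by (simp add: nprod_mprod mset_concat_upt)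

lemma count_msetof:
  assumes "inj_on x {..<n}" "i < n"
  shows "count (msetof n x e) (x i) = e i"
proof -
  have "count (msetof n x e) (x i) = (\<Sum>j<n. if j = i then e j else 0)"
    unfolding msetof_def count_sum
    by (intro sum.cong refl) (use assms in \<open>auto simp: inj_on_def\<close>)
  also have "\<dots> = e i" using assms(2) by simp
  finally show ?thesis .
qed

lemma set_msetof: "set_mset (msetof n x e) \<subseteq> x ` {..<n}"
  unfolding msetof_def by (auto simp: set_mset_sum split: if_splits)

lemma msetof_inj:
  assumes "inj_on x {..<n}" "\<forall>i\<ge>n. e i = 0" "\<forall>i\<ge>n. e' i = 0" "msetof n x e = msetof n x e'"
  shows "e = e'"
proof
  fix i show "e i = e' i"
  proof (cases "i < n")
    case True then show ?thesis using count_msetof[OF assms(1) True, of e] count_msetof[OF assms(1) True, of e'] assms(4) by simp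
  qed (use assms in auto)
qed

lemma msetof_nonempty:
  assumes "e \<noteq> (\<lambda>_. 0)" "\<forall>i\<ge>n. e i = 0"
  shows "msetof n x e \<noteq> {#}"
proof -
  obtain i where "e i \<noteq> 0" using assms(1) by auto
  then have "i < n" using assms(2) by (meson not_le)
  then have "x i \<in># msetof n x e" using \<open>e i \<noteq> 0\<close> unfolding msetof_def
    by (auto simp: set_mset_sum)
  then show ?thesis by auto
qed

context
  fixes sm :: "'k::comm_ring_1 \<Rightarrow> 'a::comm_ring \<Rightarrow> 'a"
  assumes ax: "alg_ax sm"
begin

lemma poly_eval_evv:
  "poly_eval sm n (c :: (nat \<Rightarrow> nat) \<Rightarrow> 'k) x = evv sm id (\<Sum>e\<in>{e. c e \<noteq> 0}. Poly_Mapping.single (msetof n x e) (c e))"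
  unfolding poly_eval_def by (simp add: evv_sum[OF ax] evv_single[OF ax] monomial_eval_mset)

lemma free_SFG: "free sm S \<Longrightarrow> SFG sm S"
  unfolding SFG_def
proof (intro allI impI)
  fix n and c :: "(nat \<Rightarrow> nat) \<Rightarrow> 'k" and x :: "nat \<Rightarrow> 'a"
  assume fr: "free sm S" and h: "poly_no_const n c \<and> c \<noteq> (\<lambda>_. 0) \<and> inj_on x {..<n} \<and> x ` {..<n} \<subseteq> S"
  define E where "E = {e. c e \<noteq> 0}"
  have pnc: "finite {e. c e \<noteq> 0} \<and> (\<forall>e. c e \<noteq> 0 \<longrightarrow> e \<noteq> (\<lambda>_. 0) \<and> (\<forall>i\<ge>n. e i = 0))"
    using h[THEN conjunct1] unfolding poly_no_const_def .
  have fin: "finite E" unfolding E_def using pnc by (rule conjunct1)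
  have E: "e \<noteq> (\<lambda>_. 0) \<and> (\<forall>i\<ge>n. e i = 0)" if "e \<in> E" for e
  proof -
    have "c e \<noteq> 0" using that unfolding E_def by (rule CollectD)
    then show ?thesis by (rule pnc[THEN conjunct2, rule_format])
  qed
  have inj: "inj_on x {..<n}" using h[THEN conjunct2, THEN conjunct2, THEN conjunct1] .
  have xS: "x ` {..<n} \<subseteq> S" using h[THEN conjunct2, THEN conjunct2, THEN conjunct2] .
  have cne: "c \<noteq> (\<lambda>_. 0)" using h[THEN conjunct2, THEN conjunct1] .
  define p where "p = (\<Sum>e\<in>E. Poly_Mapping.single (msetof n x e) (c e))"
  have kp: "Poly_Mapping.keys p \<subseteq> msetof n x ` E" unfolding p_def by (rule keys_sum_single)
  have pS: "p \<in> Pol S"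
    unfolding Pol_def
  proof (intro CollectI conjI ballI)
    show "0 \<notin> Poly_Mapping.keys p"
    proof
      assume "0 \<in> Poly_Mapping.keys p"
      then obtain e where "e \<in> E" "msetof n x e = 0" using kp by auto
      then show False using E msetof_nonempty by blast
    qed
    fix m assume "m \<in> Poly_Mapping.keys p"
    with kp have "m \<in> msetof n x ` E" by (rule subsetD)
    then obtain e where "m = msetof n x e" by (rule imageE)
    then have "set_mset m \<subseteq> x ` {..<n}" by (simp add: set_msetof)
    then show "set_mset m \<subseteq> S" using xS by (rule order_trans)
  qed
  have "\<exists>e. c e \<noteq> 0" using cne by (simp add: fun_eq_iff)
  then obtain e0 where e0: "c e0 \<noteq> 0" by (rule exE)
  then have e0E: "e0 \<in> E" by (simp add: E_def)
  have "Poly_Mapping.lookup p (msetof n x e0) = (\<Sum>e\<in>E. if e = e0 then c e else 0)"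
    unfolding p_def lookup_sum lookup_single
  proof (intro sum.cong refl)
    fix e assume "e \<in> E"
    then show "(c e when msetof n x e = msetof n x e0) = (if e = e0 then c e else 0)"
      using msetof_inj[OF inj, of e e0] E e0E by (auto simp: when_def)
  qed
  also have "\<dots> = c e0" using fin e0E by simp
  finally have "p \<noteq> 0" using e0 by auto
  then have "evv sm id p \<noteq> 0" using fr pS unfolding free_def by blast
  then show "poly_eval sm n c x \<noteq> 0"
    unfolding poly_eval_evv p_def E_def .
qed

lemma SFG_free: "SFG sm S \<Longrightarrow> free sm S"
  unfolding free_def
proof (intro ballI impI; rule ccontr)
  fix p assume sfg: "SFG sm S" and pS: "p \<in> Pol S" and ev0: "evv sm id p = 0" and p0: "p \<noteq> 0"
  define V where "V = (\<Union>m\<in>Poly_Mapping.keys p. set_mset m)"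
  have finV: "finite V" unfolding V_def by simp
  have VS: "V \<subseteq> S" using pS unfolding V_def Pol_def by blast
  define n where "n = card V"
  obtain x where bx0: "bij_betw x {0..<card V} V"
    using ex_bij_betw_nat_finite[OF finV] by (rule exE)
  have bx: "bij_betw x {..<n} V" using bx0 by (simp add: n_def atLeast0LessThan)
  have inj: "inj_on x {..<n}" by (rule bij_betw_imp_inj_on[OF bx])
  have xV: "x ` {..<n} = V" by (rule bij_betw_imp_surj_on[OF bx])
  define ef where "ef m = (\<lambda>i. if i < n then count m (x i) else 0)" for m :: "'a multiset"
  define c where "c e = (if (\<forall>i\<ge>n. e i = 0) then Poly_Mapping.lookup p (msetof n x e) else 0)" for e
  have F1: "msetof n x (ef m) = m" if m: "m \<in> Poly_Mapping.keys p" for m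
  proof (rule multiset_eqI)
    fix y show "count (msetof n x (ef m)) y = count m y"
    proof (cases "y \<in> V")
      case True
      then obtain i where i: "i < n" "y = x i" using xV by auto
      then show ?thesis using count_msetof[OF inj i(1)] by (simp add: ef_def)
    next
      case False
      have s1: "set_mset (msetof n x (ef m)) \<subseteq> V" using set_msetof[of n x "ef m"] xV by simp
      have s2: "set_mset m \<subseteq> V" unfolding V_def using m by (rule UN_upper)
      have "y \<notin># msetof n x (ef m)" "y \<notin># m" using s1 s2 False by (meson subsetD)+
      then show ?thesis by (simp add: not_in_iff)
    qed
  qed
  have F2: "ef (msetof n x e) = e" if "\<forall>i\<ge>n. e i = 0" for e
    using that count_msetof[OF inj] by (auto simp: ef_def fun_eq_iff)
  have efsupp: "\<forall>i\<ge>n. ef m i = 0" for m by (simp add: ef_def)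
  have supp: "{e. c e \<noteq> 0} = ef ` Poly_Mapping.keys p"
  proof
    show "{e. c e \<noteq> 0} \<subseteq> ef ` Poly_Mapping.keys p"
    proof
      fix e assume "e \<in> {e. c e \<noteq> 0}"
      then have "\<forall>i\<ge>n. e i = 0" "msetof n x e \<in> Poly_Mapping.keys p"
        by (auto simp: c_def in_keys_iff split: if_splits)
      then show "e \<in> ef ` Poly_Mapping.keys p" using F2 by (metis image_eqI)
    qed
    show "ef ` Poly_Mapping.keys p \<subseteq> {e. c e \<noteq> 0}"
      using F1 efsupp by (auto simp: c_def in_keys_iff)
  qed
  have injef: "inj_on ef (Poly_Mapping.keys p)" using F1 by (metis inj_on_inverseI)
  have nc: "poly_no_const n c"
    unfolding poly_no_const_def
  proof (rule conjI)
    show "finite {e. c e \<noteq> 0}" unfolding supp by simp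
    show "\<forall>e. c e \<noteq> 0 \<longrightarrow> e \<noteq> (\<lambda>_. 0) \<and> (\<forall>i\<ge>n. e i = 0)"
    proof (intro allI impI)
      fix e assume ce: "c e \<noteq> 0"
      have z: "\<forall>i\<ge>n. e i = 0" using ce by (auto simp: c_def split: if_splits)
      have "e \<noteq> (\<lambda>_. 0)"
      proof
        assume "e = (\<lambda>_. 0)"
        then have "msetof n x e = 0" by (simp add: msetof_def)
        then show False using ce pS by (auto simp: c_def Pol_def in_keys_iff split: if_splits)
      qed
      then show "e \<noteq> (\<lambda>_. 0) \<and> (\<forall>i\<ge>n. e i = 0)" using z by (rule conjI)
    qed
  qed
  obtain m where m: "m \<in> Poly_Mapping.keys p" using p0 keys_eq_empty[of p] by blast
  have "c (ef m) \<noteq> 0" using supp m by blast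
  then have cne: "c \<noteq> (\<lambda>_. 0)" by auto
  have "poly_eval sm n c x \<noteq> 0"
    using sfg nc cne inj xV VS unfolding SFG_def by blast
  moreover have "poly_eval sm n c x = evv sm id p"
  proof -
    have "(\<Sum>e\<in>{e. c e \<noteq> 0}. Poly_Mapping.single (msetof n x e) (c e)) =
          (\<Sum>m\<in>Poly_Mapping.keys p. Poly_Mapping.single (msetof n x (ef m)) (c (ef m)))"
      unfolding supp by (rule sum.reindex[OF injef, unfolded comp_def])
    also have "\<dots> = (\<Sum>m\<in>Poly_Mapping.keys p. Poly_Mapping.single m (Poly_Mapping.lookup p m))"
      by (intro sum.cong refl) (simp add: F1 c_def efsupp)
    also have "\<dots> = p" by (rule pm_decomp[symmetric])
    finally show ?thesis unfolding poly_eval_evv by simp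
  qed
  ultimately show False using ev0 by simp
qed

lemma SFG_iff_free: "SFG sm S \<longleftrightarrow> free sm S"
  by (rule iffI) (erule SFG_free, erule free_SFG)

end


lemma cont_comp_UNIV:
  assumes "continuous_on UNIV f" "continuous_on UNIV g"
  shows "continuous_on UNIV (g \<circ> f)"
  using continuous_on_compose[OF assms(1) continuous_on_subset[OF assms(2)]] by simp

lemma closure_closed_op:
  fixes f :: "'a::topological_space \<times> 'a \<Rightarrow> 'a"
  assumes c: "continuous_on UNIV f" and cl: "\<And>x y. x \<in> Z \<Longrightarrow> y \<in> Z \<Longrightarrow> f (x, y) \<in> Z"
    and x: "x \<in> closure Z" and y: "y \<in> closure Z"
  shows "f (x, y) \<in> closure Z"
proof -
  have "f ` (Z \<times> Z) \<subseteq> closure Z" using cl closure_subset by fastforce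
  then have "f ` closure (Z \<times> Z) \<subseteq> closure Z"
    by (intro image_closure_subset continuous_on_subset[OF c]) auto
  moreover have "(x, y) \<in> closure (Z \<times> Z)" using x y by (simp add: closure_Times)
  ultimately show ?thesis by blast
qed

lemma closure_closed_unop:
  fixes f :: "'a::topological_space \<Rightarrow> 'a"
  assumes c: "continuous_on UNIV f" and cl: "\<And>x. x \<in> Z \<Longrightarrow> f x \<in> Z"
    and x: "x \<in> closure Z"
  shows "f x \<in> closure Z"
proof -
  have "f ` Z \<subseteq> closure Z" using cl closure_subset by fastforce
  then have "f ` closure Z \<subseteq> closure Z"
    by (intro image_closure_subset continuous_on_subset[OF c]) auto
  then show ?thesis using x by blast
qed

context
  fixes sm :: "'k::real_normed_field \<Rightarrow> 'a::{comm_ring,topological_space} \<Rightarrow> 'a"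
  assumes cta: "comm_top_algebra sm"
begin

lemma cont_add: "continuous_on UNIV (\<lambda>p::'a \<times> 'a. fst p + snd p)"
  using cta unfolding comm_top_algebra_def by blast
lemma cont_mult: "continuous_on UNIV (\<lambda>p::'a \<times> 'a. fst p * snd p)"
  using cta unfolding comm_top_algebra_def by blast
lemma cont_sm: "continuous_on UNIV (\<lambda>p::'k \<times> 'a. sm (fst p) (snd p))"
  using cta unfolding comm_top_algebra_def by blast

lemma cont_sm_right: "continuous_on UNIV (\<lambda>x. sm a x)"
proof -
  have "continuous_on UNIV (\<lambda>x::'a. (a, x))" by (intro continuous_intros)
  from cont_comp_UNIV[OF this cont_sm] show ?thesis by (simp add: comp_def)
qed

lemma closure_subalg:
  assumes Z: "is_subalgebra sm Z"
  shows "is_subalgebra sm (closure Z)"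
  unfolding is_subalgebra_def
proof (intro conjI ballI allI)
  show "0 \<in> closure Z" using Z closure_subset unfolding is_subalgebra_def by blast
  fix x y assume x: "x \<in> closure Z" and y: "y \<in> closure Z"
  show "x + y \<in> closure Z"
    using closure_closed_op[OF cont_add _ x y] Z unfolding is_subalgebra_def by simp
  show "x * y \<in> closure Z"
    using closure_closed_op[OF cont_mult _ x y] Z unfolding is_subalgebra_def by simp
next
  fix a x assume x: "x \<in> closure Z"
  show "sm a x \<in> closure Z"
    using closure_closed_unop[OF cont_sm_right _ x] Z unfolding is_subalgebra_def by simp
qed

lemma density_crit:
  assumes d: "closure (gen_alg sm F) = UNIV" and FZ: "F \<subseteq> closure Z" and Z: "is_subalgebra sm Z"
  shows "closure Z = UNIV"
proof -
  have "gen_alg sm F \<subseteq> closure Z" by (rule gen_alg_least[OF closure_subalg[OF Z] FZ])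
  then have "closure (gen_alg sm F) \<subseteq> closure Z" using closure_mono closure_closure by metis
  then show ?thesis using d by blast
qed

lemma small_t:
  assumes U: "open U" and f: "f \<in> U"
  shows "\<exists>t. t \<noteq> 0 \<and> f + sm t g \<in> U"
proof -
  have ax: "alg_ax sm" by (rule cta_alg_ax[OF cta])
  define \<phi> where "\<phi> t = f + sm t g" for t
  have c1: "continuous_on UNIV (\<lambda>t::'k. (t, g))" by (intro continuous_intros)
  have c2: "continuous_on UNIV (\<lambda>t::'k. sm t g)"
    using cont_comp_UNIV[OF c1 cont_sm] by (simp add: comp_def)
  have c3: "continuous_on UNIV (\<lambda>t::'k. (f, sm t g))"
    by (intro continuous_on_Pair continuous_on_const c2)
  have c: "continuous_on UNIV \<phi>"
    using cont_comp_UNIV[OF c3 cont_add] by (simp add: comp_def \<phi>_def)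
  have o: "open (\<phi> -` U)" by (rule open_vimage[OF U c])
  have "\<phi> 0 = f" by (simp add: \<phi>_def sm_zero_left[OF ax])
  then have "0 \<in> \<phi> -` U" using f by simp
  then obtain e where e: "e > 0" "ball 0 e \<subseteq> \<phi> -` U" using o by (meson openE)
  define t :: 'k where "t = of_real (e / 2)"
  have "t \<noteq> 0" using e by (simp add: t_def)
  moreover have "t \<in> ball 0 e" using e by (simp add: t_def)
  ultimately show ?thesis using e unfolding \<phi>_def by blast
qed

end


lemma times_inf: "infinite A \<Longrightarrow> A \<times> A \<approx> A"
  using card_of_Times_same_infinite[of A] by (simp add: eqpoll_iff_card_of_ordIso)

lemma nat_times_inf:
  assumes "infinite A"
  shows "(UNIV :: nat set) \<times> A \<approx> A"
proof (rule lepoll_antisym)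
  have "(UNIV :: nat set) \<times> A \<lesssim> A \<times> A"
    by (rule times_lepoll_mono[OF infinite_le_lepoll[THEN iffD1, OF assms] lepoll_refl])
  also have "A \<times> A \<lesssim> A" using times_inf[OF assms] by (rule eqpoll_imp_lepoll)
  finally show "(UNIV :: nat set) \<times> A \<lesssim> A" .
  have "A \<approx> {0::nat} \<times> A" by (rule eqpoll_sym[OF times_singleton_eqpoll])
  also have "{0::nat} \<times> A \<lesssim> (UNIV :: nat set) \<times> A" by (rule subset_imp_lepoll) auto
  finally show "A \<lesssim> (UNIV :: nat set) \<times> A" .
qed

lemma times3_inf:
  assumes "infinite A"
  shows "A \<times> A \<times> A \<approx> A"
proof -
  have "A \<times> A \<times> A \<approx> A \<times> A" by (rule times_eqpoll_cong[OF eqpoll_refl times_inf[OF assms]])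
  also have "\<dots> \<approx> A" by (rule times_inf[OF assms])
  finally show ?thesis .
qed

lemma nat_times3_inf:
  assumes "infinite A"
  shows "(UNIV :: nat set) \<times> A \<times> A \<approx> A"
proof -
  have "(UNIV :: nat set) \<times> A \<times> A \<approx> (UNIV :: nat set) \<times> A"
    by (rule times_eqpoll_cong[OF eqpoll_refl times_inf[OF assms]])
  also have "\<dots> \<approx> A" by (rule nat_times_inf[OF assms])
  finally show ?thesis .
qed


locale constr =
  fixes sm :: "'k::real_normed_field \<Rightarrow> 'a::{comm_ring,topological_space} \<Rightarrow> 'a"
    and A :: "'c set" and F :: "'a set" and B :: "'a set set"
    and \<theta> :: "nat \<times> 'c \<Rightarrow> 'a" and \<pi> :: "'c \<times> 'c \<times> 'c \<Rightarrow> 'c" and \<iota> :: "'a set \<Rightarrow> 'c"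
  assumes cta: "comm_top_algebra sm" and frF: "free sm F"
    and dense: "closure (gen_alg sm F) = UNIV"
    and basis: "topological_basis B"
    and bth: "bij_betw \<theta> (UNIV \<times> A) F"
    and pinj: "inj_on \<pi> (A \<times> A \<times> A)" and pA: "\<pi> ` (A \<times> A \<times> A) \<subseteq> A"
    and iinj: "inj_on \<iota> B" and iA: "\<iota> ` B \<subseteq> A"
begin

lemma ax: "alg_ax sm" by (rule cta_alg_ax[OF cta])

definition Tr :: "'c set" where "Tr = \<pi> ` (A \<times> A \<times> A)"
definition pinv :: "'c \<Rightarrow> 'c \<times> 'c \<times> 'c" where "pinv b = inv_into (A \<times> A \<times> A) \<pi> b"
definition par :: "nat \<Rightarrow> 'c \<Rightarrow> 'a" where "par n b = \<theta> (n, fst (pinv b))"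
definition tt :: "nat \<Rightarrow> 'c \<Rightarrow> 'k" where
  "tt n b = (SOME t. t \<noteq> 0 \<and> (\<forall>U\<in>B. \<iota> U = fst (snd (pinv b)) \<longrightarrow> par n b \<in> U \<longrightarrow>
                 par n b + sm t (\<theta> (Suc n, b)) \<in> U))"

definition Phat :: "nat \<times> 'c \<Rightarrow> 'a multiset \<Rightarrow>\<^sub>0 'k" where
  "Phat j = (case fst j of 0 \<Rightarrow> Var (\<theta> j)
     | Suc n \<Rightarrow> (if snd j \<in> Tr then Var (par n (snd j)) + smP (tt n (snd j)) (Var (\<theta> j)) else Var (\<theta> j)))"

definition psi :: "nat \<Rightarrow> 'c \<Rightarrow> 'a multiset \<Rightarrow>\<^sub>0 'k" where
  "psi = rec_nat (\<lambda>b. Var (\<theta> (0, b)))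
     (\<lambda>n f b. if b \<in> Tr then smP (1 / tt n b) (Var (\<theta> (Suc n, b)) - f (fst (pinv b))) else Var (\<theta> (Suc n, b)))"

lemma psi_0: "psi 0 b = Var (\<theta> (0, b))" by (simp add: psi_def)
lemma psi_Suc: "psi (Suc n) b = (if b \<in> Tr then smP (1 / tt n b) (Var (\<theta> (Suc n, b)) - psi n (fst (pinv b))) else Var (\<theta> (Suc n, b)))"
  by (simp add: psi_def)

definition thinv :: "'a \<Rightarrow> nat \<times> 'c" where "thinv = inv_into (UNIV \<times> A) \<theta>"
definition s :: "'a \<Rightarrow> 'a multiset \<Rightarrow>\<^sub>0 'k" where "s f = psi (fst (thinv f)) (snd (thinv f))"

lemma s_theta: "j \<in> UNIV \<times> A \<Longrightarrow> s (\<theta> j) = psi (fst j) (snd j)"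
  unfolding s_def thinv_def using bth by (simp add: bij_betw_def inv_into_f_f)

lemma pinv_A: "b \<in> Tr \<Longrightarrow> pinv b \<in> A \<times> A \<times> A"
  unfolding pinv_def Tr_def by (rule inv_into_into)

lemma pinv_pi: "x \<in> A \<times> A \<times> A \<Longrightarrow> pinv (\<pi> x) = x"
  unfolding pinv_def by (rule inv_into_f_f[OF pinj])

lemma tt_prop: "b \<in> Tr \<Longrightarrow> tt n b \<noteq> 0 \<and> (\<forall>U\<in>B. \<iota> U = fst (snd (pinv b)) \<longrightarrow> par n b \<in> U \<longrightarrow>
                 par n b + sm (tt n b) (\<theta> (Suc n, b)) \<in> U)"
proof -
  have "\<exists>t. t \<noteq> 0 \<and> (\<forall>U\<in>B. \<iota> U = fst (snd (pinv b)) \<longrightarrow> par n b \<in> U \<longrightarrow>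
           par n b + sm t (\<theta> (Suc n, b)) \<in> U)"
  proof (cases "\<exists>U\<in>B. \<iota> U = fst (snd (pinv b)) \<and> par n b \<in> U")
    case True
    then obtain U where U: "U \<in> B" "\<iota> U = fst (snd (pinv b))" "par n b \<in> U" by blast
    have "open U" using basis U(1) by (rule topological_basis_open)
    from small_t[OF cta this U(3)] obtain t where t: "t \<noteq> 0" "par n b + sm t (\<theta> (Suc n, b)) \<in> U" by blast
    have "\<forall>U'\<in>B. \<iota> U' = fst (snd (pinv b)) \<longrightarrow> par n b \<in> U' \<longrightarrow> par n b + sm t (\<theta> (Suc n, b)) \<in> U'"
    proof (intro ballI impI)
      fix U' assume "U' \<in> B" "\<iota> U' = fst (snd (pinv b))"
      then have "U' = U" using iinj U(1,2) by (metis inj_onD)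
      then show "par n b + sm t (\<theta> (Suc n, b)) \<in> U'" using t by simp
    qed
    then show ?thesis using t by blast
  next
    case False
    then show ?thesis by (intro exI[of _ 1]) auto
  qed
  from someI_ex[OF this] show ?thesis unfolding tt_def .
qed

lemma key: "j \<in> UNIV \<times> A \<Longrightarrow> evv smP s (Phat j) = Var (\<theta> j)"
proof -
  assume j: "j \<in> UNIV \<times> A"
  obtain m b where jmb: "j = (m, b)" by (cases j)
  have bA: "b \<in> A" using j jmb by simp
  show ?thesis
  proof (cases m)
    case 0
    then show ?thesis using s_theta[OF j] jmb
      by (simp add: Phat_def evv_Var[OF alg_ax_smP] psi_0)
  next
    case (Suc n)
    show ?thesis
    proof (cases "b \<in> Tr")
      case True
      have aA: "fst (pinv b) \<in> A" using pinv_A[OF True] by auto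
      have t0: "tt n b \<noteq> 0" using tt_prop[OF True] by blast
      have sp: "s (par n b) = psi n (fst (pinv b))"
        unfolding par_def using s_theta[of "(n, fst (pinv b))"] aA by simp
      have sj: "s (\<theta> j) = psi (Suc n) b" using s_theta[OF j] jmb Suc by simp
      have "evv smP s (Phat j) = psi n (fst (pinv b)) + smP (tt n b) (psi (Suc n) b)"
        using True jmb Suc sp sj
        by (simp add: Phat_def evv_Var[OF alg_ax_smP] evv_add[OF alg_ax_smP] evv_smP[OF alg_ax_smP])
      also have "\<dots> = psi n (fst (pinv b)) + smP (tt n b * (1 / tt n b)) (Var (\<theta> (Suc n, b)) - psi n (fst (pinv b)))"
        using True by (simp add: psi_Suc sm_sm[OF alg_ax_smP])
      also have "\<dots> = Var (\<theta> j)"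
        using t0 jmb Suc by (simp add: sm_one[OF alg_ax_smP])
      finally show ?thesis .
    next
      case False
      then show ?thesis using s_theta[OF j] jmb Suc
        by (simp add: Phat_def evv_Var[OF alg_ax_smP] psi_Suc)
    qed
  qed
qed


lemma theta_F: "j \<in> UNIV \<times> A \<Longrightarrow> \<theta> j \<in> F"
  using bth by (auto simp: bij_betw_def)

lemma Phat_Pol: "j \<in> UNIV \<times> A \<Longrightarrow> Phat j \<in> Pol F"
proof -
  assume j: "j \<in> UNIV \<times> A"
  have v: "Var (\<theta> j) \<in> Pol F" by (rule Pol_Var[OF theta_F[OF j]])
  show ?thesis
  proof (cases "fst j")
    case 0 then show ?thesis using v by (simp add: Phat_def)
  next
    case (Suc n)
    show ?thesis
    proof (cases "snd j \<in> Tr")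
      case True
      have "par n (snd j) \<in> F" unfolding par_def
        using pinv_A[OF True] by (intro theta_F) auto
      then have "Var (par n (snd j)) + smP (tt n (snd j)) (Var (\<theta> j)) \<in> Pol F"
        by (intro Pol_add Pol_smP Pol_Var v)
      then show ?thesis using Suc True by (simp add: Phat_def)
    next
      case False then show ?thesis using Suc v by (simp add: Phat_def)
    qed
  qed
qed

definition h :: "nat \<times> 'c \<Rightarrow> 'a" where "h j = evv sm id (Phat j)"

lemma h_inj: "inj_on h (UNIV \<times> A)"
proof (rule inj_onI)
  fix j1 j2 assume j1: "j1 \<in> UNIV \<times> A" and j2: "j2 \<in> UNIV \<times> A" and e: "h j1 = h j2"
  have "Phat j1 = Phat j2"
    using free_eq[OF ax frF Phat_Pol[OF j1] Phat_Pol[OF j2]] e by (simp add: h_def)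
  then have "Var (\<theta> j1) = (Var (\<theta> j2) :: 'a multiset \<Rightarrow>\<^sub>0 'k)" using key[OF j1] key[OF j2] by simp
  then have "\<theta> j1 = \<theta> j2" by (rule Var_inj)
  then show "j1 = j2" using bth j1 j2 by (auto simp: bij_betw_def inj_on_def)
qed

definition H :: "'a set" where "H = h ` (UNIV \<times> A)"
definition hinv :: "'a \<Rightarrow> nat \<times> 'c" where "hinv = inv_into (UNIV \<times> A) h"

lemma free_H: "free sm H"
proof (rule free_transfer[OF ax frF, where r = "\<lambda>y. Phat (hinv y)" and \<rho> = "\<lambda>y. \<theta> (hinv y)" and s = s])
  fix y assume "y \<in> H"
  then have hy: "hinv y \<in> UNIV \<times> A" "h (hinv y) = y"
    unfolding H_def hinv_def by (auto intro: inv_into_into f_inv_into_f)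
  show "Phat (hinv y) \<in> Pol F \<and> evv sm id (Phat (hinv y)) = y"
    using Phat_Pol[OF hy(1)] hy(2) by (simp add: h_def)
  show "evv smP s (Phat (hinv y)) = Var (\<theta> (hinv y))" by (rule key[OF hy(1)])
next
  show "inj_on (\<lambda>y. \<theta> (hinv y)) H"
  proof (rule inj_onI)
    fix y1 y2 assume "y1 \<in> H" "y2 \<in> H" and e: "\<theta> (hinv y1) = \<theta> (hinv y2)"
    then have hy: "hinv y1 \<in> UNIV \<times> A" "h (hinv y1) = y1" "hinv y2 \<in> UNIV \<times> A" "h (hinv y2) = y2"
      unfolding H_def hinv_def by (auto intro: inv_into_into f_inv_into_f)
    have "hinv y1 = hinv y2" using e bth hy(1,3) by (auto simp: bij_betw_def inj_on_def)
    then show "y1 = y2" using hy(2,4) by metis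
  qed
qed

definition Jk :: "'c \<Rightarrow> (nat \<times> 'c) set" where
  "Jk k = (\<lambda>(n, a, u). (Suc n, \<pi> (a, u, k))) ` (UNIV \<times> A \<times> A)"

definition Y :: "'c \<Rightarrow> 'a set" where "Y k = gen_alg sm (h ` Jk k)"

lemma Jk_sub: "k \<in> A \<Longrightarrow> Jk k \<subseteq> UNIV \<times> A"
  unfolding Jk_def using pA by auto

lemma Jk_disj: "k1 \<in> A \<Longrightarrow> k2 \<in> A \<Longrightarrow> k1 \<noteq> k2 \<Longrightarrow> Jk k1 \<inter> Jk k2 = {}"
proof -
  assume k: "k1 \<in> A" "k2 \<in> A" "k1 \<noteq> k2"
  { fix n a u n' a' u'
    assume "a \<in> A" "u \<in> A" "a' \<in> A" "u' \<in> A" "\<pi> (a, u, k1) = \<pi> (a', u', k2)"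
    then have "(a, u, k1) = (a', u', k2)" using pinj k by (auto simp: inj_on_def)
    then have False using k by simp }
  then show ?thesis unfolding Jk_def by fastforce
qed

lemma Jk_eqpoll: "infinite A \<Longrightarrow> k \<in> A \<Longrightarrow> Jk k \<approx> A"
proof -
  assume infA: "infinite A" and k: "k \<in> A"
  have "inj_on (\<lambda>(n, a, u). (Suc n, \<pi> (a, u, k))) (UNIV \<times> A \<times> A)"
    using pinj k by (auto simp: inj_on_def)
  then have "Jk k \<approx> (UNIV :: nat set) \<times> A \<times> A" unfolding Jk_def by (rule inj_on_image_eqpoll_self)
  also have "\<dots> \<approx> A" by (rule nat_times3_inf[OF infA])
  finally show ?thesis .
qed

lemma h_Jk: "k \<in> A \<Longrightarrow> h ` Jk k \<subseteq> H"
  unfolding H_def using Jk_sub by blast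

lemma Y_sub: "k \<in> A \<Longrightarrow> Y k \<subseteq> gen_alg sm F"
proof -
  assume k: "k \<in> A"
  have "h ` Jk k \<subseteq> gen_alg sm F"
  proof
    fix y assume "y \<in> h ` Jk k"
    then obtain j where j: "j \<in> Jk k" "y = h j" by blast
    then have "j \<in> UNIV \<times> A" using Jk_sub[OF k] by blast
    then show "y \<in> gen_alg sm F" using j Pol_gen_alg[OF ax Phat_Pol] by (simp add: h_def)
  qed
  then show ?thesis unfolding Y_def by (rule gen_alg_least[OF gen_alg_subalg])
qed

lemma Y_disj: "k1 \<in> A \<Longrightarrow> k2 \<in> A \<Longrightarrow> k1 \<noteq> k2 \<Longrightarrow> Y k1 \<inter> Y k2 = {0}"
proof -
  assume k: "k1 \<in> A" "k2 \<in> A" "k1 \<noteq> k2"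
  have "h ` Jk k1 \<inter> h ` Jk k2 = {}"
    using Jk_disj[OF k] h_inj Jk_sub[OF k(1)] Jk_sub[OF k(2)]
    by (smt (verit, ccfv_threshold) disjoint_iff image_iff inj_on_def subsetD)
  then show ?thesis unfolding Y_def
    by (rule free_disjoint[OF ax free_H h_Jk[OF k(1)] h_Jk[OF k(2)]])
qed

lemma Y_free: "infinite A \<Longrightarrow> k \<in> A \<Longrightarrow> free_subalgebra_card sm A (Y k)"
  unfolding free_subalgebra_card_def
proof (intro exI conjI)
  assume infA: "infinite A" and k: "k \<in> A"
  show "SFG sm (h ` Jk k)"
    using SFG_iff_free[OF ax] free_mono[OF free_H h_Jk[OF k]] by blast
  have "h ` Jk k \<approx> Jk k" by (rule inj_on_image_eqpoll_self[OF inj_on_subset[OF h_inj Jk_sub[OF k]]])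
  also have "\<dots> \<approx> A" by (rule Jk_eqpoll[OF infA k])
  finally show "h ` Jk k \<approx> A" .
  show "Y k = gen_alg sm (h ` Jk k)" by (simp add: Y_def)
qed


lemma Y_dense: "k \<in> A \<Longrightarrow> closure (Y k) = UNIV"
proof -
  assume k: "k \<in> A"
  have "F \<subseteq> closure (Y k)"
  proof
    fix f assume fF: "f \<in> F"
    then obtain n a where na: "a \<in> A" "f = \<theta> (n, a)" using bth unfolding bij_betw_def by auto
    show "f \<in> closure (Y k)"
      unfolding closure_iff_nhds_not_empty
    proof (intro allI impI)
      fix W S assume SW: "S \<subseteq> W" and oS: "open S" and fS: "f \<in> S"
      obtain U where U: "U \<in> B" "f \<in> U" "U \<subseteq> S" using topological_basisE[OF basis oS fS] by blast
      have uA: "\<iota> U \<in> A" using iA U(1) by blast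
      define b where "b = \<pi> (a, \<iota> U, k)"
      have trip: "(a, \<iota> U, k) \<in> A \<times> A \<times> A" using na uA k by simp
      have bT: "b \<in> Tr" unfolding b_def Tr_def using trip by blast
      have pb: "pinv b = (a, \<iota> U, k)" unfolding b_def by (rule pinv_pi[OF trip])
      have parf: "par n b = f" unfolding par_def pb using na by simp
      define j where "j = (Suc n, b)"
      have jJ: "j \<in> Jk k" unfolding Jk_def j_def b_def using na uA by force
      have "h j = f + sm (tt n b) (\<theta> j)"
        using bT parf by (simp add: h_def Phat_def j_def evv_add[OF ax] evv_Var[OF ax] evv_smP[OF ax])
      also have "\<dots> \<in> U" using tt_prop[OF bT, of n] U pb parf by (simp add: j_def)
      finally have "h j \<in> S" using U(3) by blast
      moreover have "h j \<in> Y k" unfolding Y_def using jJ gen_alg_sub by blast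
      ultimately show "Y k \<inter> W \<noteq> {}" using SW by blast
    qed
  qed
  then show ?thesis
    by (rule density_crit[OF cta dense _ gen_alg_subalg[of sm "h ` Jk k", folded Y_def]])
qed

end


lemma main_equiv:
  fixes sm :: "'k::real_normed_field \<Rightarrow> 'a::{comm_ring,topological_space} \<Rightarrow> 'a"
    and M :: "'a set" and A :: "'c set"
  assumes cta: "comm_top_algebra sm" and infA: "infinite A" and wl: "weight_le TYPE('a) A"
  shows "inf_strongly_dense_algebrable sm A M \<longleftrightarrow> strongly_dense_algebrable sm A M"
proof
  assume "inf_strongly_dense_algebrable sm A M"
  then have "\<exists>Y :: 'c \<Rightarrow> 'a set. (\<forall>\<kappa>\<in>A. free_subalgebra_card sm A (Y \<kappa>) \<and> closure (Y \<kappa>) = UNIV \<and> Y \<kappa> \<subseteq> M \<union> {0}) \<and>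
        (\<forall>\<kappa>1\<in>A. \<forall>\<kappa>2\<in>A. \<kappa>1 \<noteq> \<kappa>2 \<longrightarrow> Y \<kappa>1 \<inter> Y \<kappa>2 = {0})"
    unfolding inf_strongly_dense_algebrable_def .
  then obtain Y :: "'c \<Rightarrow> 'a set" where
    YY: "(\<forall>\<kappa>\<in>A. free_subalgebra_card sm A (Y \<kappa>) \<and> closure (Y \<kappa>) = UNIV \<and> Y \<kappa> \<subseteq> M \<union> {0}) \<and>
        (\<forall>\<kappa>1\<in>A. \<forall>\<kappa>2\<in>A. \<kappa>1 \<noteq> \<kappa>2 \<longrightarrow> Y \<kappa>1 \<inter> Y \<kappa>2 = {0})"
    by (rule exE)
  have Y: "\<forall>\<kappa>\<in>A. free_subalgebra_card sm A (Y \<kappa>) \<and> closure (Y \<kappa>) = UNIV \<and> Y \<kappa> \<subseteq> M \<union> {0}"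
    using YY by (rule conjunct1)
  have "A \<noteq> {}" using infA by (rule contrapos_nn) simp
  then obtain k where k: "k \<in> A" by (meson ex_in_conv)
  have "free_subalgebra_card sm A (Y k) \<and> closure (Y k) = UNIV \<and> Y k \<subseteq> M \<union> {0}"
    using Y k by (rule bspec)
  then show "strongly_dense_algebrable sm A M"
    unfolding strongly_dense_algebrable_def by (rule exI)
next
  assume "strongly_dense_algebrable sm A M"
  then obtain Y0 where Y0: "free_subalgebra_card sm A Y0" "closure Y0 = UNIV" "Y0 \<subseteq> M \<union> {0}"
    unfolding strongly_dense_algebrable_def by (elim exE conjE) (rule that)
  then obtain F where F: "SFG sm F" "F \<approx> A" "Y0 = gen_alg sm F"
    unfolding free_subalgebra_card_def by (elim exE conjE) (rule that)
  have ax: "alg_ax sm" by (rule cta_alg_ax[OF cta])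
  have frF: "free sm F" by (rule SFG_iff_free[OF ax, THEN iffD1, OF F(1)])
  obtain B :: "'a set set" where B: "topological_basis B" "B \<lesssim> A"
    using wl unfolding weight_le_def by (elim exE conjE) (rule that)
  have "(UNIV :: nat set) \<times> A \<approx> F"
    using eqpoll_trans[OF nat_times_inf[OF infA] eqpoll_sym[OF F(2)]] .
  then obtain \<theta> where th: "bij_betw \<theta> ((UNIV :: nat set) \<times> A) F" unfolding eqpoll_def by (elim exE) (rule that)
  have "A \<times> A \<times> A \<lesssim> A" by (rule eqpoll_imp_lepoll[OF times3_inf[OF infA]])
  then obtain \<pi> where pi: "inj_on \<pi> (A \<times> A \<times> A)" "\<pi> ` (A \<times> A \<times> A) \<subseteq> A"
    unfolding lepoll_def by (elim exE conjE) (rule that)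
  obtain \<iota> where io: "inj_on \<iota> B" "\<iota> ` B \<subseteq> A" using B(2) unfolding lepoll_def by (elim exE conjE) (rule that)
  have dense: "closure (gen_alg sm F) = UNIV" using Y0(2) F(3) by simp
  interpret C: constr sm A F B \<theta> \<pi> \<iota>
    by (rule constr.intro[OF cta frF dense B(1) th pi(1) pi(2) io(1) io(2)])
  show "inf_strongly_dense_algebrable sm A M"
    unfolding inf_strongly_dense_algebrable_def
  proof (intro exI[of _ C.Y] conjI ballI impI)
    fix k assume k: "k \<in> A"
    show "free_subalgebra_card sm A (C.Y k)" by (rule C.Y_free[OF infA k])
    show "closure (C.Y k) = UNIV" by (rule C.Y_dense[OF k])
    have "gen_alg sm F \<subseteq> M \<union> {0}" using Y0(3) F(3) by simp
    with C.Y_sub[OF k] show "C.Y k \<subseteq> M \<union> {0}" by (rule order_trans)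
  next
    fix k1 k2 assume "k1 \<in> A" "k2 \<in> A" "k1 \<noteq> k2"
    then show "C.Y k1 \<inter> C.Y k2 = {0}" by (rule C.Y_disj)
  qed
qed

theorem theorem4p6:
  fixes M :: "'a::{comm_ring,topological_space} set"
    and A :: "'c set"
  assumes "infinite A"
    and "weight_le TYPE('a) A"
  shows "(\<forall>sm :: real \<Rightarrow> 'a \<Rightarrow> 'a. comm_top_algebra sm \<longrightarrow>
            (inf_strongly_dense_algebrable sm A M \<longleftrightarrow> strongly_dense_algebrable sm A M)) \<and>
         (\<forall>sm :: complex \<Rightarrow> 'a \<Rightarrow> 'a. comm_top_algebra sm \<longrightarrow>
            (inf_strongly_dense_algebrable sm A M \<longleftrightarrow> strongly_dense_algebrable sm A M))"
proof (intro conjI allI impI)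
  fix sm :: "real \<Rightarrow> 'a \<Rightarrow> 'a" assume "comm_top_algebra sm"
  then show "inf_strongly_dense_algebrable sm A M \<longleftrightarrow> strongly_dense_algebrable sm A M"
    by (rule main_equiv[OF _ assms])
next
  fix sm :: "complex \<Rightarrow> 'a \<Rightarrow> 'a" assume "comm_top_algebra sm"
  then show "inf_strongly_dense_algebrable sm A M \<longleftrightarrow> strongly_dense_algebrable sm A M"
    by (rule main_equiv[OF _ assms])
qed


end
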